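(* Let $A=(Q_A,\Sigma,\delta_A,q_A,F_A)$ and $B=(Q_B,\Sigma,\delta_B,q_B,F_B)$ be NFAs such that $L(A)\cap L(B)=\emptyset$. Then there is a pattern of $A$ and $B$ if and only if there is an infinite tower of prefixes between $L(A)$ and $L(B)$.
   Context: Here $q_A,q_B$ are the initial states and $F_A,F_B$ the accepting states. The product automaton $A\times B$ has state set $Q_A\times Q_B$, initial state $(q_A,q_B)$, and transitions $(p,q)\xrightarrow{a}(p',q')$ whenever $p'\in\delta_A(p,a)$ and $q'\in\delta_B(q,a)$. A tuple $(S,\sigma,\sigma_1,\sigma_2,\tau,\tau_1,\tau_2)$ is a pattern of $A$ and $B$ if $S$ is a strongly connected component of the transition graph of $A\times B$ containing at least one edge, $\sigma,\sigma_1,\sigma_2,\tau,\tau_1,\tau_2$ are states of $A\times B$ such that: $\sigma_1\in F_A\times Q_B$ and $\tau_1\in Q_A\times F_B$; $\sigma,\sigma_2,\tau,\tau_2$ belong to $S$; there is a string $x$ such that both $\sigma_1$ and $\sigma_2$ are reachable from $\sigma$ under $x$; there is a string $y$ such that both $\tau_1$ and $\tau_2$ are reachable from $\tau$ under $y$; and $S$ is reachable from the initial state $(q_A,q_B)$. A string $v$ is a prefix of $w$, written $v\le w$, if $w=vu$ for some $u$. An infinite tower of prefixes between $K$ and $L$ is an infinite sequence $(w_i)_{i\ge1}$ with $w_1\in K\cup L$ and, for all $i$, $w_i\le w_{i+1}$, $w_i\in K$ implies $w_{i+1}\in L$, and $w_i\in L$ implies $w_{i+1}\in K$. *)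

theory Defs
  imports Main "HOL-Library.Sublist"
begin

record ('q, 'a) nfa =
  states :: "'q set"
  delta  :: "'q \<Rightarrow> 'a \<Rightarrow> 'q set"
  init   :: 'q
  final  :: "'q set"

definition nfa :: "'a set \<Rightarrow> ('q, 'a) nfa \<Rightarrow> bool" where
  "nfa \<Sigma> A \<longleftrightarrow> finite \<Sigma> \<and> finite (states A) \<and> init A \<in> states A \<and>
     final A \<subseteq> states A \<and>
     (\<forall>q\<in>states A. \<forall>a\<in>\<Sigma>. delta A q a \<subseteq> states A)"

fun delta_star :: "('q, 'a) nfa \<Rightarrow> 'q \<Rightarrow> 'a list \<Rightarrow> 'q set" where
  "delta_star A q [] = {q}"
| "delta_star A q (a # w) = (\<Union>p\<in>delta A q a. delta_star A p w)"

definition lang :: "'a set \<Rightarrow> ('q, 'a) nfa \<Rightarrow> 'a list set" where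
  "lang \<Sigma> A = {w. w \<in> lists \<Sigma> \<and> delta_star A (init A) w \<inter> final A \<noteq> {}}"

definition prod_nfa :: "('p, 'a) nfa \<Rightarrow> ('q, 'a) nfa \<Rightarrow> ('p \<times> 'q, 'a) nfa" where
  "prod_nfa A B = \<lparr> states = states A \<times> states B,
     delta = (\<lambda>(p, q) a. delta A p a \<times> delta B q a),
     init = (init A, init B),
     final = final A \<times> final B \<rparr>"

definition edges :: "'a set \<Rightarrow> ('q, 'a) nfa \<Rightarrow> ('q \<times> 'q) set" where
  "edges \<Sigma> A = {(s, t). s \<in> states A \<and> (\<exists>a\<in>\<Sigma>. t \<in> delta A s a)}"

definition is_scc :: "'a set \<Rightarrow> ('q, 'a) nfa \<Rightarrow> 'q set \<Rightarrow> bool" where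
  "is_scc \<Sigma> A S \<longleftrightarrow> S \<noteq> {} \<and> S \<subseteq> states A \<and>
     (\<forall>s\<in>S. \<forall>t\<in>S. (s, t) \<in> (edges \<Sigma> A)\<^sup>*) \<and>
     (\<forall>s\<in>S. \<forall>t\<in>states A. (s, t) \<in> (edges \<Sigma> A)\<^sup>* \<and> (t, s) \<in> (edges \<Sigma> A)\<^sup>* \<longrightarrow> t \<in> S)"

definition is_pattern ::
  "'a set \<Rightarrow> ('p, 'a) nfa \<Rightarrow> ('q, 'a) nfa \<Rightarrow> ('p \<times> 'q) set \<Rightarrow>
   'p \<times> 'q \<Rightarrow> 'p \<times> 'q \<Rightarrow> 'p \<times> 'q \<Rightarrow> 'p \<times> 'q \<Rightarrow> 'p \<times> 'q \<Rightarrow> 'p \<times> 'q \<Rightarrow> bool" where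
  "is_pattern \<Sigma> A B S \<sigma> \<sigma>1 \<sigma>2 \<tau> \<tau>1 \<tau>2 \<longleftrightarrow>
     (let P = prod_nfa A B in
       is_scc \<Sigma> P S \<and> (\<exists>s\<in>S. \<exists>t\<in>S. (s, t) \<in> edges \<Sigma> P) \<and>
       \<sigma>1 \<in> final A \<times> states B \<and> \<tau>1 \<in> states A \<times> final B \<and>
       \<sigma> \<in> S \<and> \<sigma>2 \<in> S \<and> \<tau> \<in> S \<and> \<tau>2 \<in> S \<and>
       (\<exists>x\<in>lists \<Sigma>. \<sigma>1 \<in> delta_star P \<sigma> x \<and> \<sigma>2 \<in> delta_star P \<sigma> x) \<and>
       (\<exists>y\<in>lists \<Sigma>. \<tau>1 \<in> delta_star P \<tau> y \<and> \<tau>2 \<in> delta_star P \<tau> y) \<and>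
       (\<exists>s\<in>S. (init P, s) \<in> (edges \<Sigma> P)\<^sup>*))"

definition infinite_tower :: "'a list set \<Rightarrow> 'a list set \<Rightarrow> (nat \<Rightarrow> 'a list) \<Rightarrow> bool" where
  "infinite_tower K L w \<longleftrightarrow> w 0 \<in> K \<union> L \<and>
     (\<forall>i. prefix (w i) (w (Suc i)) \<and>
          (w i \<in> K \<longrightarrow> w (Suc i) \<in> L) \<and> (w i \<in> L \<longrightarrow> w (Suc i) \<in> K))"

end

theory Submission
  imports Defs "HOL-Library.Infinite_Set"
begin

lemma ds_append: "delta_star M q (u @ v) = (\<Union>p\<in>delta_star M q u. delta_star M p v)"
  by (induction u arbitrary: q) auto

lemma ds_single[simp]: "delta_star M q [a] = delta M q a"
  by simp

lemma ds_prod: "delta_star (prod_nfa A B) (p, q) w = delta_star A p w \<times> delta_star B q w"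
  by (induction w arbitrary: p q) (auto simp: prod_nfa_def)

lemma edges_word:
  assumes "(s, t) \<in> (edges \<Sigma> M)\<^sup>*"
  shows "\<exists>u\<in>lists \<Sigma>. t \<in> delta_star M s u"
  using assms
proof (induction rule: rtrancl_induct)
  case base
  then show ?case by (intro bexI[of _ "[]"]) auto
next
  case (step t t')
  then obtain u where u: "u \<in> lists \<Sigma>" "t \<in> delta_star M s u" by blast
  from step(2) obtain a where a: "a \<in> \<Sigma>" "t' \<in> delta M t a" by (auto simp: edges_def)
  show ?case using u a by (intro bexI[of _ "u @ [a]"]) (auto simp: ds_append)
qed

lemma prefix_mono_chain:
  assumes "\<And>i. prefix (w i) (w (Suc i))" "i \<le> j"
  shows "prefix (w i) (w j)"
  using assms(2)
proof (induction rule: dec_induct)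
  case base then show ?case by simp
next
  case (step n) then show ?case using assms(1) prefix_order.order_trans by blast
qed

lemma prefix_nth_eq: "prefix xs ys \<Longrightarrow> k < length xs \<Longrightarrow> xs ! k = ys ! k"
  by (auto simp: prefix_def nth_append)

lemma live_run:
  fixes w :: "nat \<Rightarrow> 'a list" and M :: "('q,'a) nfa"
  assumes M: "nfa \<Sigma> M" and pre: "\<And>i. prefix (w i) (w (Suc i))"
    and len: "\<And>i. i \<le> length (w i)" and lst: "\<And>i. w i \<in> lists \<Sigma>"
    and inf: "infinite {i. w i \<in> lang \<Sigma> M}"
  shows "\<exists>\<rho>. \<rho> 0 = init M \<and> (\<forall>k. \<rho> k \<in> states M \<and>
      \<rho> (Suc k) \<in> delta M (\<rho> k) (w (Suc k) ! k) \<and>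
      infinite {i. delta_star M (\<rho> k) (drop k (w i)) \<inter> final M \<noteq> {}})"
proof -
  define \<alpha> where "\<alpha> = (\<lambda>k. w (Suc k) ! k)"
  have nth: "w i ! k = \<alpha> k" if "k < length (w i)" for i k
  proof (cases "i \<le> Suc k")
    case True
    then show ?thesis unfolding \<alpha>_def using prefix_nth_eq prefix_mono_chain[of w, OF pre True] that by blast
  next
    case False
    then have "Suc k \<le> i" by simp
    from prefix_mono_chain[of w, OF pre this] len[of "Suc k"] show ?thesis
      unfolding \<alpha>_def by (metis Suc_le_lessD prefix_nth_eq)
  qed
  have \<alpha>\<Sigma>: "\<alpha> k \<in> \<Sigma>" for k
    using lst[of "Suc k"] len[of "Suc k"] unfolding \<alpha>_def
    by (metis Suc_le_lessD in_listsD nth_mem)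
  define live where "live k p \<longleftrightarrow> infinite {i. delta_star M p (drop k (w i)) \<inter> final M \<noteq> {}}" for k p
  define P where "P k p \<longleftrightarrow> p \<in> states M \<and> live k p \<and> (k = 0 \<longrightarrow> p = init M)" for k p
  have P0: "\<exists>x. P 0 x"
  proof -
    have "{i. w i \<in> lang \<Sigma> M} \<subseteq> {i. delta_star M (init M) (drop 0 (w i)) \<inter> final M \<noteq> {}}"
      by (auto simp: lang_def)
    then have "live 0 (init M)" unfolding live_def using inf finite_subset by blast
    then show ?thesis using M unfolding P_def nfa_def by auto
  qed
  have step: "\<exists>y. P (Suc k) y \<and> y \<in> delta M p (\<alpha> k)" if "P k p" for k p
  proof -
    let ?D = "delta M p (\<alpha> k)"
    have pS: "p \<in> states M" and lv: "live k p" using that by (auto simp: P_def)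
    have Dsub: "?D \<subseteq> states M" using M pS \<alpha>\<Sigma> unfolding nfa_def by blast
    have finD: "finite ?D" using M Dsub unfolding nfa_def using finite_subset by blast
    let ?X = "{i. delta_star M p (drop k (w i)) \<inter> final M \<noteq> {}}"
    have "infinite (?X - {..k})" using lv unfolding live_def by simp
    moreover have "?X - {..k} \<subseteq> (\<Union>q\<in>?D. {i. delta_star M q (drop (Suc k) (w i)) \<inter> final M \<noteq> {}})"
    proof
      fix i assume i: "i \<in> ?X - {..k}"
      then have kl: "k < length (w i)" using len[of i] by auto
      then have "drop k (w i) = \<alpha> k # drop (Suc k) (w i)"
        using nth[OF kl] by (metis Cons_nth_drop_Suc)
      then show "i \<in> (\<Union>q\<in>?D. {i. delta_star M q (drop (Suc k) (w i)) \<inter> final M \<noteq> {}})"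
        using i by auto
    qed
    ultimately have "infinite (\<Union>q\<in>?D. {i. delta_star M q (drop (Suc k) (w i)) \<inter> final M \<noteq> {}})"
      using finite_subset by blast
    then obtain q where q: "q \<in> ?D" "live (Suc k) q" using finD unfolding live_def by blast
    then show ?thesis using Dsub unfolding P_def by auto
  qed
  obtain \<rho> where \<rho>: "\<forall>n. P n (\<rho> n) \<and> \<rho> (Suc n) \<in> delta M (\<rho> n) (\<alpha> n)"
    using dependent_nat_choice[of P "\<lambda>k p y. y \<in> delta M p (\<alpha> k)", OF P0 step] by blast
  show ?thesis
    apply (rule exI[of _ \<rho>])
    using \<rho> unfolding P_def live_def \<alpha>_def by auto
qed


lemma chain_nth:
  assumes pre: "\<And>i. prefix (w i) (w (Suc i))" and len: "\<And>i. i \<le> length (w i)"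
    and "k < length (w i)"
  shows "w i ! k = w (Suc k) ! k"
proof (cases "i \<le> Suc k")
  case True
  then show ?thesis using prefix_nth_eq prefix_mono_chain[of w, OF pre True] assms(3) by blast
next
  case False
  then have "Suc k \<le> i" by simp
  from prefix_mono_chain[of w, OF pre this] len[of "Suc k"] show ?thesis
    by (metis Suc_le_lessD prefix_nth_eq)
qed

lemma tower_pattern:
  assumes A: "nfa \<Sigma> A" and B: "nfa \<Sigma> B" and disj: "lang \<Sigma> A \<inter> lang \<Sigma> B = {}"
    and tw: "infinite_tower (lang \<Sigma> A) (lang \<Sigma> B) w"
  shows "\<exists>S \<sigma> \<sigma>1 \<sigma>2 \<tau> \<tau>1 \<tau>2. is_pattern \<Sigma> A B S \<sigma> \<sigma>1 \<sigma>2 \<tau> \<tau>1 \<tau>2"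
proof -
  let ?K = "lang \<Sigma> A" and ?L = "lang \<Sigma> B"
  have t0: "w 0 \<in> ?K \<union> ?L" and tS: "\<And>i. prefix (w i) (w (Suc i)) \<and>
      (w i \<in> ?K \<longrightarrow> w (Suc i) \<in> ?L) \<and> (w i \<in> ?L \<longrightarrow> w (Suc i) \<in> ?K)"
    using tw unfolding infinite_tower_def by auto
  have pre: "\<And>i. prefix (w i) (w (Suc i))" using tS by blast
  have mem: "w i \<in> ?K \<union> ?L" for i
    by (induction i) (use t0 tS in auto)
  have neq: "w i \<noteq> w (Suc i)" for i
    using mem[of i] tS[of i] disj by auto
  have len: "i \<le> length (w i)" for i
  proof (induction i)
    case (Suc i)
    have "length (w i) < length (w (Suc i))"
      using pre[of i] neq[of i] by (simp add: prefix_length_less strict_prefix_def)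
    then show ?case using Suc by simp
  qed simp
  have lst: "w i \<in> lists \<Sigma>" for i using mem[of i] by (auto simp: lang_def)
  have infK: "infinite {i. w i \<in> ?K}"
    unfolding infinite_nat_iff_unbounded_le
  proof
    fix m show "\<exists>n\<ge>m. n \<in> {i. w i \<in> ?K}"
    proof (cases "w m \<in> ?K")
      case True then show ?thesis by auto
    next
      case False then have "w (Suc m) \<in> ?K" using mem[of m] tS[of m] by blast
      then show ?thesis by (intro exI[of _ "Suc m"]) auto
    qed
  qed
  have infL: "infinite {i. w i \<in> ?L}"
    unfolding infinite_nat_iff_unbounded_le
  proof
    fix m show "\<exists>n\<ge>m. n \<in> {i. w i \<in> ?L}"
    proof (cases "w m \<in> ?L")
      case True then show ?thesis by auto
    next
      case False then have "w (Suc m) \<in> ?L" using mem[of m] tS[of m] by blast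
      then show ?thesis by (intro exI[of _ "Suc m"]) auto
    qed
  qed
  define \<alpha> where "\<alpha> = (\<lambda>k. w (Suc k) ! k)"
  have nth: "w i ! k = \<alpha> k" if "k < length (w i)" for i k
    unfolding \<alpha>_def using chain_nth[of w, OF pre len that] .
  have \<alpha>\<Sigma>: "\<alpha> k \<in> \<Sigma>" for k
    using lst[of "Suc k"] len[of "Suc k"] unfolding \<alpha>_def
    by (metis Suc_le_lessD in_listsD nth_mem)
  obtain \<rho>A where \<rho>A: "\<rho>A 0 = init A" "\<And>k. \<rho>A k \<in> states A"
      "\<And>k. \<rho>A (Suc k) \<in> delta A (\<rho>A k) (\<alpha> k)"
      "\<And>k. infinite {i. delta_star A (\<rho>A k) (drop k (w i)) \<inter> final A \<noteq> {}}"
    using live_run[of \<Sigma> A w, OF A pre len lst infK] unfolding \<alpha>_def by blast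
  obtain \<rho>B where \<rho>B: "\<rho>B 0 = init B" "\<And>k. \<rho>B k \<in> states B"
      "\<And>k. \<rho>B (Suc k) \<in> delta B (\<rho>B k) (\<alpha> k)"
      "\<And>k. infinite {i. delta_star B (\<rho>B k) (drop k (w i)) \<inter> final B \<noteq> {}}"
    using live_run[of \<Sigma> B w, OF B pre len lst infL] unfolding \<alpha>_def by blast
  define P where "P = prod_nfa A B"
  define E where "E = edges \<Sigma> P"
  define \<rho> where "\<rho> k = (\<rho>A k, \<rho>B k)" for k
  have \<rho>S: "\<rho> k \<in> states P" for k using \<rho>A \<rho>B by (auto simp: \<rho>_def P_def prod_nfa_def)
  have \<rho>E: "(\<rho> k, \<rho> (Suc k)) \<in> E" for k
    using \<rho>S[of k] \<rho>A(3)[of k] \<rho>B(3)[of k] \<alpha>\<Sigma>[of k]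
    by (auto simp: E_def edges_def \<rho>_def P_def prod_nfa_def)
  have path: "(\<rho> k, \<rho> n) \<in> E\<^sup>*" if "k \<le> n" for k n
    using that
  proof (induction rule: dec_induct)
    case (step n) then show ?case using \<rho>E[of n] by (meson rtrancl.rtrancl_into_rtrancl)
  qed simp
  have runA: "\<rho>A n \<in> delta_star A (\<rho>A k) (map \<alpha> [k..<n])" if "k \<le> n" for k n
    using that
  proof (induction rule: dec_induct)
    case (step n) then show ?case using \<rho>A(3)[of n] by (auto simp: ds_append)
  qed simp
  have runB: "\<rho>B n \<in> delta_star B (\<rho>B k) (map \<alpha> [k..<n])" if "k \<le> n" for k n
    using that
  proof (induction rule: dec_induct)
    case (step n) then show ?case using \<rho>B(3)[of n] by (auto simp: ds_append)
  qed simp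
  have dropw: "drop k (w i) = map \<alpha> [k..<length (w i)]" if "k \<le> length (w i)" for k i
    by (rule nth_equalityI) (use that nth in auto)
  have fin: "finite (states P)" using A B by (auto simp: P_def prod_nfa_def nfa_def)
  have U: "(\<Union>s\<in>states P. {k. \<rho> k = s}) = UNIV" using \<rho>S by auto
  have "\<exists>s\<in>states P. infinite {k. \<rho> k = s}"
  proof (rule ccontr)
    assume "\<not> ?thesis"
    then have "finite (\<Union>s\<in>states P. {k. \<rho> k = s})" using fin by blast
    then show False unfolding U by simp
  qed
  then obtain \<sigma> where \<sigma>S: "\<sigma> \<in> states P" and inf\<sigma>: "infinite {k. \<rho> k = \<sigma>}" by blast
  have "{k. \<rho> k = \<sigma>} \<noteq> {}" using inf\<sigma> by (metis finite.emptyI)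
  then obtain k1 where k1: "\<rho> k1 = \<sigma>" by blast
  define S where "S = {t \<in> states P. (\<sigma>, t) \<in> E\<^sup>* \<and> (t, \<sigma>) \<in> E\<^sup>*}"
  have later: "\<rho> n \<in> S" if "k1 \<le> n" for n
  proof -
    obtain k2 where "k2 \<ge> n" "\<rho> k2 = \<sigma>" using inf\<sigma> unfolding infinite_nat_iff_unbounded_le by blast
    then show ?thesis using path[of k1 n] path[of n k2] that k1 \<rho>S unfolding S_def by auto
  qed
  have \<sigma>in: "\<sigma> \<in> S" using later[of k1] k1 by simp
  obtain iA where iA: "iA > k1" "delta_star A (\<rho>A k1) (drop k1 (w iA)) \<inter> final A \<noteq> {}"
    using \<rho>A(4)[of k1] unfolding infinite_nat_iff_unbounded by blast
  define nA where "nA = length (w iA)"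
  have k1nA: "k1 \<le> nA" using len[of iA] iA(1) unfolding nA_def by simp
  define x where "x = map \<alpha> [k1..<nA]"
  have xd: "drop k1 (w iA) = x" unfolding x_def nA_def using dropw k1nA nA_def by simp
  obtain pf where pf: "pf \<in> delta_star A (\<rho>A k1) x" "pf \<in> final A" using iA(2) xd by blast
  have xl: "x \<in> lists \<Sigma>" unfolding x_def using \<alpha>\<Sigma> by auto
  obtain iB where iB: "iB > k1" "delta_star B (\<rho>B k1) (drop k1 (w iB)) \<inter> final B \<noteq> {}"
    using \<rho>B(4)[of k1] unfolding infinite_nat_iff_unbounded by blast
  define nB where "nB = length (w iB)"
  have k1nB: "k1 \<le> nB" using len[of iB] iB(1) unfolding nB_def by simp
  define y where "y = map \<alpha> [k1..<nB]"
  have yd: "drop k1 (w iB) = y" unfolding y_def nB_def using dropw k1nB nB_def by simp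
  obtain qf where qf: "qf \<in> delta_star B (\<rho>B k1) y" "qf \<in> final B" using iB(2) yd by blast
  have yl: "y \<in> lists \<Sigma>" unfolding y_def using \<alpha>\<Sigma> by auto
  have \<sigma>eq: "\<sigma> = (\<rho>A k1, \<rho>B k1)" using k1 unfolding \<rho>_def by simp
  have scc: "is_scc \<Sigma> P S"
    unfolding is_scc_def
  proof (intro conjI)
    show "S \<noteq> {}" using \<sigma>in by blast
    show "S \<subseteq> states P" unfolding S_def by blast
    show "\<forall>s\<in>S. \<forall>t\<in>S. (s, t) \<in> (edges \<Sigma> P)\<^sup>*"
      unfolding S_def E_def[symmetric] by (blast intro: rtrancl_trans)
    show "\<forall>s\<in>S. \<forall>t\<in>states P. (s, t) \<in> (edges \<Sigma> P)\<^sup>* \<and> (t, s) \<in> (edges \<Sigma> P)\<^sup>* \<longrightarrow> t \<in> S"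
      unfolding S_def E_def[symmetric] by (blast intro: rtrancl_trans)
  qed
  have edgeS: "\<exists>s\<in>S. \<exists>t\<in>S. (s, t) \<in> edges \<Sigma> P"
    using later[of k1] later[of "Suc k1"] \<rho>E[of k1] unfolding E_def by auto
  have reach: "\<exists>s\<in>S. (init P, s) \<in> (edges \<Sigma> P)\<^sup>*"
    using path[of 0 k1] \<sigma>in k1 \<rho>A(1) \<rho>B(1) unfolding E_def \<rho>_def P_def prod_nfa_def by auto
  have "is_pattern \<Sigma> A B S \<sigma> (pf, \<rho>B nA) (\<rho> nA) \<sigma> (\<rho>A nB, qf) (\<rho> nB)"
    unfolding is_pattern_def Let_def P_def[symmetric]
  proof (intro conjI)
    show "is_scc \<Sigma> P S" by (rule scc)
    show "\<exists>s\<in>S. \<exists>t\<in>S. (s, t) \<in> edges \<Sigma> P" by (rule edgeS)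
    show "(pf, \<rho>B nA) \<in> final A \<times> states B" using pf \<rho>B by auto
    show "(\<rho>A nB, qf) \<in> states A \<times> final B" using qf \<rho>A by auto
    show "\<sigma> \<in> S" by (rule \<sigma>in)
    show "\<sigma> \<in> S" by (rule \<sigma>in)
    show "\<rho> nA \<in> S" using later k1nA by blast
    show "\<rho> nB \<in> S" using later k1nB by blast
    show "\<exists>x\<in>lists \<Sigma>. (pf, \<rho>B nA) \<in> delta_star P \<sigma> x \<and> \<rho> nA \<in> delta_star P \<sigma> x"
      using xl pf runA[OF k1nA] runB[OF k1nA] unfolding \<sigma>eq P_def ds_prod x_def \<rho>_def by auto
    show "\<exists>y\<in>lists \<Sigma>. (\<rho>A nB, qf) \<in> delta_star P \<sigma> y \<and> \<rho> nB \<in> delta_star P \<sigma> y"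
      using yl qf runA[OF k1nB] runB[OF k1nB] unfolding \<sigma>eq P_def ds_prod y_def \<rho>_def by auto
    show "\<exists>s\<in>S. (init P, s) \<in> (edges \<Sigma> P)\<^sup>*" by (rule reach)
  qed
  then show ?thesis by blast
qed


lemma pattern_tower:
  assumes A: "nfa \<Sigma> A" and B: "nfa \<Sigma> B" and disj: "lang \<Sigma> A \<inter> lang \<Sigma> B = {}"
    and pat: "is_pattern \<Sigma> A B S \<sigma> \<sigma>1 \<sigma>2 \<tau> \<tau>1 \<tau>2"
  shows "\<exists>w. infinite_tower (lang \<Sigma> A) (lang \<Sigma> B) w"
proof -
  define P where "P = prod_nfa A B"
  define E where "E = edges \<Sigma> P"
  have scc: "is_scc \<Sigma> P S" and s1: "\<sigma>1 \<in> final A \<times> states B" and t1: "\<tau>1 \<in> states A \<times> final B"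
    and inS: "\<sigma> \<in> S" "\<sigma>2 \<in> S" "\<tau> \<in> S" "\<tau>2 \<in> S"
    and xw: "\<exists>x\<in>lists \<Sigma>. \<sigma>1 \<in> delta_star P \<sigma> x \<and> \<sigma>2 \<in> delta_star P \<sigma> x"
    and yw: "\<exists>y\<in>lists \<Sigma>. \<tau>1 \<in> delta_star P \<tau> y \<and> \<tau>2 \<in> delta_star P \<tau> y"
    and rch: "\<exists>s\<in>S. (init P, s) \<in> (edges \<Sigma> P)\<^sup>*"
    using pat unfolding is_pattern_def Let_def P_def by auto
  have conn: "(s, t) \<in> E\<^sup>*" if "s \<in> S" "t \<in> S" for s t
    using scc that unfolding is_scc_def E_def by blast
  obtain x where x: "x \<in> lists \<Sigma>" "\<sigma>1 \<in> delta_star P \<sigma> x" "\<sigma>2 \<in> delta_star P \<sigma> x" using xw by blast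
  obtain y where y: "y \<in> lists \<Sigma>" "\<tau>1 \<in> delta_star P \<tau> y" "\<tau>2 \<in> delta_star P \<tau> y" using yw by blast
  obtain s0 where s0: "s0 \<in> S" "(init P, s0) \<in> E\<^sup>*" using rch unfolding E_def by blast
  have "(init P, \<sigma>) \<in> E\<^sup>*" using rtrancl_trans[OF s0(2) conn[OF s0(1) inS(1)]] .
  then obtain u0 where u0: "u0 \<in> lists \<Sigma>" "\<sigma> \<in> delta_star P (init P) u0"
    using edges_word[of "init P" \<sigma> \<Sigma> P] unfolding E_def by blast
  obtain z1 where z1: "z1 \<in> lists \<Sigma>" "\<tau> \<in> delta_star P \<sigma>2 z1"
    using edges_word[of \<sigma>2 \<tau> \<Sigma> P] conn[OF inS(2) inS(3)] unfolding E_def by blast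
  obtain z2 where z2: "z2 \<in> lists \<Sigma>" "\<sigma> \<in> delta_star P \<tau>2 z2"
    using edges_word[of \<tau>2 \<sigma> \<Sigma> P] conn[OF inS(4) inS(1)] unfolding E_def by blast
  define w where "w = rec_nat (u0 @ x) (\<lambda>n v. if even n then v @ z1 @ y else v @ z2 @ x)"
  have w0: "w 0 = u0 @ x" unfolding w_def by simp
  have wS: "w (Suc n) = (if even n then w n @ z1 @ y else w n @ z2 @ x)" for n
    unfolding w_def by simp
  have inv: "w n \<in> lists \<Sigma> \<and> (even n \<longrightarrow> \<sigma>1 \<in> delta_star P (init P) (w n) \<and> \<sigma>2 \<in> delta_star P (init P) (w n))
      \<and> (odd n \<longrightarrow> \<tau>1 \<in> delta_star P (init P) (w n) \<and> \<tau>2 \<in> delta_star P (init P) (w n))" for n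
  proof (induction n)
    case 0
    then show ?case using u0 x by (auto simp: w0 ds_append)
  next
    case (Suc n)
    show ?case
    proof (cases "even n")
      case True
      then have "\<sigma>2 \<in> delta_star P (init P) (w n)" "w n \<in> lists \<Sigma>" using Suc by auto
      then show ?thesis using True z1 y by (auto simp: wS ds_append)
    next
      case False
      then have "\<tau>2 \<in> delta_star P (init P) (w n)" "w n \<in> lists \<Sigma>" using Suc by auto
      then show ?thesis using False z2 x by (auto simp: wS ds_append)
    qed
  qed
  have initP: "init P = (init A, init B)" unfolding P_def prod_nfa_def by simp
  have inA: "w n \<in> lang \<Sigma> A" if "even n" for n
  proof -
    have "\<sigma>1 \<in> delta_star P (init P) (w n)" "w n \<in> lists \<Sigma>" using inv[of n] that by auto
    then have "\<sigma>1 \<in> delta_star P (init A, init B) (w n)" "w n \<in> lists \<Sigma>" using initP by auto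
    then have "\<sigma>1 \<in> delta_star A (init A) (w n) \<times> delta_star B (init B) (w n)" "w n \<in> lists \<Sigma>"
      unfolding P_def ds_prod by auto
    then show ?thesis using s1 unfolding lang_def by auto
  qed
  have inB: "w n \<in> lang \<Sigma> B" if "odd n" for n
  proof -
    have "\<tau>1 \<in> delta_star P (init P) (w n)" "w n \<in> lists \<Sigma>" using inv[of n] that by auto
    then have "\<tau>1 \<in> delta_star P (init A, init B) (w n)" "w n \<in> lists \<Sigma>" using initP by auto
    then have "\<tau>1 \<in> delta_star A (init A) (w n) \<times> delta_star B (init B) (w n)" "w n \<in> lists \<Sigma>"
      unfolding P_def ds_prod by auto
    then show ?thesis using t1 unfolding lang_def by auto
  qed
  have "infinite_tower (lang \<Sigma> A) (lang \<Sigma> B) w"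
    unfolding infinite_tower_def
  proof (intro conjI allI)
    show "w 0 \<in> lang \<Sigma> A \<union> lang \<Sigma> B" using inA[of 0] by simp
  next
    fix i show "prefix (w i) (w (Suc i))" by (simp add: wS)
  next
    fix i show "w i \<in> lang \<Sigma> A \<longrightarrow> w (Suc i) \<in> lang \<Sigma> B"
      using inA inB disj by (cases "even i") auto
  next
    fix i show "w i \<in> lang \<Sigma> B \<longrightarrow> w (Suc i) \<in> lang \<Sigma> A"
      using inA inB disj by (cases "even i") auto
  qed
  then show ?thesis by blast
qed

theorem theorem18:
  fixes \<Sigma> :: "'a set" and A :: "('p, 'a) nfa" and B :: "('q, 'a) nfa"
  assumes "nfa \<Sigma> A" and "nfa \<Sigma> B"
    and "lang \<Sigma> A \<inter> lang \<Sigma> B = {}"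
  shows "(\<exists>S \<sigma> \<sigma>1 \<sigma>2 \<tau> \<tau>1 \<tau>2. is_pattern \<Sigma> A B S \<sigma> \<sigma>1 \<sigma>2 \<tau> \<tau>1 \<tau>2) \<longleftrightarrow>
         (\<exists>w. infinite_tower (lang \<Sigma> A) (lang \<Sigma> B) w)"
  using pattern_tower[OF assms] tower_pattern[OF assms] by blast

end
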